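(* Let $E_1,E_2$ be vector bundles over $M$ with connections $D_1,D_2$ and let $(E,D)=(E_1\oplus E_2,D_1+D_2)$. Then $D$ is exact if and only if $D_1$ and $D_2$ are both exact.
   Context: For a connection $D$ on $E$: $D^\wedge$ is the exterior covariant derivative $\phi_b{}^\alpha\mapsto D_{[a}\phi_{b]}{}^\alpha$, $\kappa=D^\wedge\circ D$ the curvature (assumed of constant rank). $D$ is exact if every section $\phi$ of $\Lambda^1\otimes E$ with $D^\wedge\phi=\kappa(\psi)$ for some section $\psi$ of $E$ is of the form $D\eta$ for some section $\eta$ of $E$. Statements are local. *)

theory Defs
  imports "HOL-Analysis.Analysis"
begin

text \<open>Local setting: an open coordinate patch U of real^'n over which the bundles are
trivialised; a section of a rank-r bundle is a map real^'n => real^'r (only values on U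
matter), an E-valued 1-form phi has components phi x $ b $ alpha, an E-valued 2-form has
components w x $ a $ b $ alpha, and a connection is D = d + Gamma with connection
coefficients Gamma x $ b $ alpha $ beta.\<close>

definition pd :: "'n::finite \<Rightarrow> (real^'n \<Rightarrow> real) \<Rightarrow> real^'n \<Rightarrow> real" where
  "pd i f x = deriv (\<lambda>t. f (x + t *\<^sub>R axis i 1)) 0"

fun Ck :: "nat \<Rightarrow> (real^'n::finite) set \<Rightarrow> (real^'n \<Rightarrow> real) \<Rightarrow> bool" where
  "Ck 0 U f = continuous_on U f"
| "Ck (Suc k) U f = (continuous_on U f \<and>
     (\<forall>i. (\<forall>x\<in>U. ((\<lambda>t. f (x + t *\<^sub>R axis i 1)) has_real_derivative pd i f x) (at 0))
          \<and> Ck k U (pd i f)))"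

definition smooth_fun :: "(real^'n::finite) set \<Rightarrow> (real^'n \<Rightarrow> real) \<Rightarrow> bool" where
  "smooth_fun U f = (\<forall>k. Ck k U f)"

definition smooth_sec :: "(real^'n::finite) set \<Rightarrow> (real^'n \<Rightarrow> real^'r::finite) \<Rightarrow> bool" where
  "smooth_sec U s = (\<forall>\<alpha>. smooth_fun U (\<lambda>x. s x $ \<alpha>))"

definition smooth_form :: "(real^'n::finite) set \<Rightarrow> (real^'n \<Rightarrow> real^'r::finite^'n) \<Rightarrow> bool" where
  "smooth_form U \<phi> = (\<forall>b \<alpha>. smooth_fun U (\<lambda>x. \<phi> x $ b $ \<alpha>))"

definition smooth_conn :: "(real^'n::finite) set \<Rightarrow> (real^'n \<Rightarrow> real^'r::finite^'r^'n) \<Rightarrow> bool" where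
  "smooth_conn U \<Gamma> = (\<forall>b \<alpha> \<beta>. smooth_fun U (\<lambda>x. \<Gamma> x $ b $ \<alpha> $ \<beta>))"

definition cov :: "(real^'n::finite \<Rightarrow> real^'r::finite^'r^'n) \<Rightarrow> (real^'n \<Rightarrow> real^'r) \<Rightarrow> real^'n \<Rightarrow> real^'r^'n" where
  "cov \<Gamma> \<eta> x = (\<chi> b \<alpha>. pd b (\<lambda>y. \<eta> y $ \<alpha>) x + (\<Sum>\<beta>\<in>UNIV. \<Gamma> x $ b $ \<alpha> $ \<beta> * \<eta> x $ \<beta>))"

definition ext_cov :: "(real^'n::finite \<Rightarrow> real^'r::finite^'r^'n) \<Rightarrow> (real^'n \<Rightarrow> real^'r^'n) \<Rightarrow> real^'n \<Rightarrow> real^'r^'n^'n" where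
  "ext_cov \<Gamma> \<phi> x = (\<chi> a b \<alpha>. (1/2) *
      ((pd a (\<lambda>y. \<phi> y $ b $ \<alpha>) x + (\<Sum>\<beta>\<in>UNIV. \<Gamma> x $ a $ \<alpha> $ \<beta> * \<phi> x $ b $ \<beta>))
     - (pd b (\<lambda>y. \<phi> y $ a $ \<alpha>) x + (\<Sum>\<beta>\<in>UNIV. \<Gamma> x $ b $ \<alpha> $ \<beta> * \<phi> x $ a $ \<beta>))))"

definition curv :: "(real^'n::finite \<Rightarrow> real^'r::finite^'r^'n) \<Rightarrow> (real^'n \<Rightarrow> real^'r) \<Rightarrow> real^'n \<Rightarrow> real^'r^'n^'n" where
  "curv \<Gamma> \<psi> = ext_cov \<Gamma> (cov \<Gamma> \<psi>)"

text \<open>Rank of the curvature (a bundle map E -> Lambda^2 (x) E) at a point x of U.\<close>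
definition curv_rank :: "(real^'n::finite) set \<Rightarrow> (real^'n \<Rightarrow> real^'r::finite^'r^'n) \<Rightarrow> real^'n \<Rightarrow> nat" where
  "curv_rank U \<Gamma> x = dim {curv \<Gamma> \<psi> x | \<psi>. smooth_sec U \<psi>}"

definition curv_const_rank :: "(real^'n::finite) set \<Rightarrow> (real^'n \<Rightarrow> real^'r::finite^'r^'n) \<Rightarrow> bool" where
  "curv_const_rank U \<Gamma> = (\<forall>x\<in>U. \<forall>y\<in>U. curv_rank U \<Gamma> x = curv_rank U \<Gamma> y)"

definition exact_conn :: "(real^'n::finite) set \<Rightarrow> (real^'n \<Rightarrow> real^'r::finite^'r^'n) \<Rightarrow> bool" where
  "exact_conn U \<Gamma> = (\<forall>x\<in>U. \<forall>V. open V \<and> x \<in> V \<and> V \<subseteq> U \<longrightarrow>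
     (\<forall>\<phi> \<psi>. smooth_form V \<phi> \<and> smooth_sec V \<psi> \<and> (\<forall>y\<in>V. ext_cov \<Gamma> \<phi> y = curv \<Gamma> \<psi> y) \<longrightarrow>
        (\<exists>W \<eta>. open W \<and> x \<in> W \<and> W \<subseteq> V \<and> smooth_sec W \<eta> \<and> (\<forall>y\<in>W. cov \<Gamma> \<eta> y = \<phi> y))))"

definition conn_sum :: "(real^'n::finite \<Rightarrow> real^'r::finite^'r^'n) \<Rightarrow> (real^'n \<Rightarrow> real^'s::finite^'s^'n)
    \<Rightarrow> real^'n \<Rightarrow> real^('r + 's)^('r + 's)^'n" where
  "conn_sum \<Gamma>1 \<Gamma>2 x = (\<chi> b \<alpha> \<beta>. (case (\<alpha>, \<beta>) of
        (Inl i, Inl j) \<Rightarrow> \<Gamma>1 x $ b $ i $ j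
      | (Inr i, Inr j) \<Rightarrow> \<Gamma>2 x $ b $ i $ j
      | _ \<Rightarrow> 0))"

end

theory Submission
  imports Defs
begin

lemma sum_UNIV_Plus:
  fixes f :: "('a::finite + 'b::finite) \<Rightarrow> 'c::comm_monoid_add"
  shows "sum f UNIV = sum (\<lambda>i. f (Inl i)) UNIV + sum (\<lambda>j. f (Inr j)) UNIV"
proof -
  have "(UNIV :: ('a + 'b) set) = range Inl \<union> range Inr" by (metis UNIV_Plus_UNIV Plus_def)
  then have "sum f UNIV = sum f (range Inl \<union> range Inr)" by simp
  also have "\<dots> = sum f (range Inl) + sum f (range Inr)"
    by (rule sum.union_disjoint) auto
  also have "\<dots> = sum (\<lambda>i. f (Inl i)) UNIV + sum (\<lambda>j. f (Inr j)) UNIV"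
    by (simp add: sum.reindex)
  finally show ?thesis .
qed

definition prjL :: "(real^'n::finite \<Rightarrow> real^('r::finite + 's::finite)) \<Rightarrow> real^'n \<Rightarrow> real^'r" where
  "prjL \<eta> y = (\<chi> a. \<eta> y $ Inl a)"
definition prjR :: "(real^'n::finite \<Rightarrow> real^('r::finite + 's::finite)) \<Rightarrow> real^'n \<Rightarrow> real^'s" where
  "prjR \<eta> y = (\<chi> a. \<eta> y $ Inr a)"
definition fprjL :: "(real^'n::finite \<Rightarrow> real^('r::finite + 's::finite)^'n) \<Rightarrow> real^'n \<Rightarrow> real^'r^'n" where
  "fprjL \<phi> y = (\<chi> c a. \<phi> y $ c $ Inl a)"
definition fprjR :: "(real^'n::finite \<Rightarrow> real^('r::finite + 's::finite)^'n) \<Rightarrow> real^'n \<Rightarrow> real^'s^'n" where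
  "fprjR \<phi> y = (\<chi> c a. \<phi> y $ c $ Inr a)"

lemma cov_L: "cov (conn_sum \<Gamma>1 \<Gamma>2) \<eta> x $ b $ Inl \<alpha> = cov \<Gamma>1 (prjL \<eta>) x $ b $ \<alpha>"
  unfolding cov_def conn_sum_def prjL_def by (simp add: sum_UNIV_Plus)

lemma cov_R: "cov (conn_sum \<Gamma>1 \<Gamma>2) \<eta> x $ b $ Inr \<alpha> = cov \<Gamma>2 (prjR \<eta>) x $ b $ \<alpha>"
  unfolding cov_def conn_sum_def prjR_def by (simp add: sum_UNIV_Plus)

lemma ext_L: "ext_cov (conn_sum \<Gamma>1 \<Gamma>2) \<phi> x $ a $ b $ Inl \<alpha> = ext_cov \<Gamma>1 (fprjL \<phi>) x $ a $ b $ \<alpha>"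
  unfolding ext_cov_def conn_sum_def fprjL_def by (simp add: sum_UNIV_Plus)

lemma ext_R: "ext_cov (conn_sum \<Gamma>1 \<Gamma>2) \<phi> x $ a $ b $ Inr \<alpha> = ext_cov \<Gamma>2 (fprjR \<phi>) x $ a $ b $ \<alpha>"
  unfolding ext_cov_def conn_sum_def fprjR_def by (simp add: sum_UNIV_Plus)

lemma fprjL_cov: "fprjL (cov (conn_sum \<Gamma>1 \<Gamma>2) \<eta>) = cov \<Gamma>1 (prjL \<eta>)"
  by (rule ext) (simp add: fprjL_def cov_L vec_eq_iff)

lemma fprjR_cov: "fprjR (cov (conn_sum \<Gamma>1 \<Gamma>2) \<eta>) = cov \<Gamma>2 (prjR \<eta>)"
  by (rule ext) (simp add: fprjR_def cov_R vec_eq_iff)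

lemma curv_L: "curv (conn_sum \<Gamma>1 \<Gamma>2) \<psi> x $ a $ b $ Inl \<alpha> = curv \<Gamma>1 (prjL \<psi>) x $ a $ b $ \<alpha>"
  unfolding curv_def by (simp add: ext_L fprjL_cov)

lemma curv_R: "curv (conn_sum \<Gamma>1 \<Gamma>2) \<psi> x $ a $ b $ Inr \<alpha> = curv \<Gamma>2 (prjR \<psi>) x $ a $ b $ \<alpha>"
  unfolding curv_def by (simp add: ext_R fprjR_cov)

lemma pd_zero: "pd i (\<lambda>_. 0) x = 0"
  unfolding pd_def by simp

lemma Ck_zero: "Ck k U (\<lambda>_. 0)"
  by (induction k) (auto simp: pd_zero[abs_def])

lemma smooth_zero: "smooth_fun U (\<lambda>_. 0)"
  by (simp add: smooth_fun_def Ck_zero)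

lemma Ck_mono: "Ck k U f \<Longrightarrow> W \<subseteq> U \<Longrightarrow> Ck k W f"
  by (induction k arbitrary: f) (auto intro: continuous_on_subset)

lemma smooth_sec_mono: "smooth_sec U f \<Longrightarrow> W \<subseteq> U \<Longrightarrow> smooth_sec W f"
  unfolding smooth_sec_def smooth_fun_def using Ck_mono by blast

lemma cov_zero: "cov \<Gamma> (\<lambda>_. 0) = (\<lambda>_. 0)"
  by (rule ext) (simp add: cov_def pd_zero vec_eq_iff)

lemma ext_zero: "ext_cov \<Gamma> (\<lambda>_. 0) = (\<lambda>_. 0)"
  by (rule ext) (simp add: ext_cov_def pd_zero vec_eq_iff)

lemma curv_zero: "curv \<Gamma> (\<lambda>_. 0) = (\<lambda>_. 0)"
  by (simp add: curv_def cov_zero ext_zero)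



definition embL :: "(real^'n::finite \<Rightarrow> real^'r::finite^'n) \<Rightarrow> real^'n \<Rightarrow> real^('r + 's::finite)^'n" where
  "embL \<phi> y = (\<chi> c \<beta>. case \<beta> of Inl a \<Rightarrow> \<phi> y $ c $ a | Inr _ \<Rightarrow> 0)"
definition embR :: "(real^'n::finite \<Rightarrow> real^'s::finite^'n) \<Rightarrow> real^'n \<Rightarrow> real^('r::finite + 's)^'n" where
  "embR \<phi> y = (\<chi> c \<beta>. case \<beta> of Inr a \<Rightarrow> \<phi> y $ c $ a | Inl _ \<Rightarrow> 0)"
definition sembL :: "(real^'n::finite \<Rightarrow> real^'r::finite) \<Rightarrow> real^'n \<Rightarrow> real^('r + 's::finite)" where
  "sembL \<psi> y = (\<chi> \<beta>. case \<beta> of Inl a \<Rightarrow> \<psi> y $ a | Inr _ \<Rightarrow> 0)"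
definition sembR :: "(real^'n::finite \<Rightarrow> real^'s::finite) \<Rightarrow> real^'n \<Rightarrow> real^('r::finite + 's)" where
  "sembR \<psi> y = (\<chi> \<beta>. case \<beta> of Inr a \<Rightarrow> \<psi> y $ a | Inl _ \<Rightarrow> 0)"

lemma fprjL_embL [simp]: "fprjL (embL \<phi>) = \<phi>"
  by (rule ext) (simp add: fprjL_def embL_def vec_eq_iff)
lemma fprjR_embL [simp]: "fprjR (embL \<phi>) = (\<lambda>_. 0)"
  by (rule ext) (simp add: fprjR_def embL_def vec_eq_iff)
lemma fprjR_embR [simp]: "fprjR (embR \<phi>) = \<phi>"
  by (rule ext) (simp add: fprjR_def embR_def vec_eq_iff)
lemma fprjL_embR [simp]: "fprjL (embR \<phi>) = (\<lambda>_. 0)"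
  by (rule ext) (simp add: fprjL_def embR_def vec_eq_iff)
lemma prjL_sembL [simp]: "prjL (sembL \<phi>) = \<phi>"
  by (rule ext) (simp add: prjL_def sembL_def vec_eq_iff)
lemma prjR_sembL [simp]: "prjR (sembL \<phi>) = (\<lambda>_. 0)"
  by (rule ext) (simp add: prjR_def sembL_def vec_eq_iff)
lemma prjR_sembR [simp]: "prjR (sembR \<phi>) = \<phi>"
  by (rule ext) (simp add: prjR_def sembR_def vec_eq_iff)
lemma prjL_sembR [simp]: "prjL (sembR \<phi>) = (\<lambda>_. 0)"
  by (rule ext) (simp add: prjL_def sembR_def vec_eq_iff)

lemma sum_vec_eq:
  fixes u v :: "real^('r::finite + 's::finite)^'n^'m::finite"
  shows "(\<forall>a b \<alpha>. u $ a $ b $ Inl \<alpha> = v $ a $ b $ Inl \<alpha>) \<and> (\<forall>a b \<alpha>. u $ a $ b $ Inr \<alpha> = v $ a $ b $ Inr \<alpha>) \<Longrightarrow> u = v"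
  by (simp add: vec_eq_iff) (metis sum.exhaust)

lemma sum_vec_eq1:
  fixes u v :: "real^('r::finite + 's::finite)^'n::finite"
  shows "(\<forall>b \<alpha>. u $ b $ Inl \<alpha> = v $ b $ Inl \<alpha>) \<and> (\<forall>b \<alpha>. u $ b $ Inr \<alpha> = v $ b $ Inr \<alpha>) \<Longrightarrow> u = v"
  by (simp add: vec_eq_iff) (metis sum.exhaust)

lemma smooth_form_embL: "smooth_form V \<phi> \<Longrightarrow> smooth_form V (embL \<phi>)"
  unfolding smooth_form_def embL_def apply (intro allI) subgoal for b \<alpha> by (cases \<alpha>) (simp_all add: smooth_zero) done
lemma smooth_form_embR: "smooth_form V \<phi> \<Longrightarrow> smooth_form V (embR \<phi>)"
  unfolding smooth_form_def embR_def apply (intro allI) subgoal for b \<alpha> by (cases \<alpha>) (simp_all add: smooth_zero) done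
lemma smooth_sec_sembL: "smooth_sec V \<phi> \<Longrightarrow> smooth_sec V (sembL \<phi>)"
  unfolding smooth_sec_def sembL_def apply (intro allI) subgoal for \<alpha> by (cases \<alpha>) (simp_all add: smooth_zero) done
lemma smooth_sec_sembR: "smooth_sec V \<phi> \<Longrightarrow> smooth_sec V (sembR \<phi>)"
  unfolding smooth_sec_def sembR_def apply (intro allI) subgoal for \<alpha> by (cases \<alpha>) (simp_all add: smooth_zero) done
lemma smooth_sec_prjL: "smooth_sec V \<eta> \<Longrightarrow> smooth_sec V (prjL \<eta>)"
  unfolding smooth_sec_def prjL_def by auto
lemma smooth_sec_prjR: "smooth_sec V \<eta> \<Longrightarrow> smooth_sec V (prjR \<eta>)"
  unfolding smooth_sec_def prjR_def by auto
lemma smooth_form_fprjL: "smooth_form V \<eta> \<Longrightarrow> smooth_form V (fprjL \<eta>)"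
  unfolding smooth_form_def fprjL_def by auto
lemma smooth_form_fprjR: "smooth_form V \<eta> \<Longrightarrow> smooth_form V (fprjR \<eta>)"
  unfolding smooth_form_def fprjR_def by auto


lemma dir1:
  fixes \<Gamma>1 :: "real^'n::finite \<Rightarrow> real^'r::finite^'r^'n"
    and \<Gamma>2 :: "real^'n \<Rightarrow> real^'s::finite^'s^'n"
  assumes ex: "exact_conn U (conn_sum \<Gamma>1 \<Gamma>2)"
  shows "exact_conn U \<Gamma>1"
  unfolding exact_conn_def
proof (intro ballI allI impI)
  fix x V \<phi>1 \<psi>1
  assume xV: "open V \<and> x \<in> V \<and> V \<subseteq> U" and x: "x \<in> U"
    and h: "smooth_form V \<phi>1 \<and> smooth_sec V \<psi>1 \<and> (\<forall>y\<in>V. ext_cov \<Gamma>1 \<phi>1 y = curv \<Gamma>1 \<psi>1 y)"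
  let ?\<phi> = "embL \<phi>1 :: _ \<Rightarrow> real^('r + 's)^'n"
  let ?\<psi> = "sembL \<psi>1 :: _ \<Rightarrow> real^('r + 's)"
  have "\<forall>y\<in>V. ext_cov (conn_sum \<Gamma>1 \<Gamma>2) ?\<phi> y = curv (conn_sum \<Gamma>1 \<Gamma>2) ?\<psi> y"
    using h by (auto intro!: sum_vec_eq simp: ext_L ext_R curv_L curv_R ext_zero curv_zero)
  moreover have "smooth_form V ?\<phi>" "smooth_sec V ?\<psi>"
    using h smooth_form_embL smooth_sec_sembL by blast+
  ultimately obtain W \<eta> where W: "open W" "x \<in> W" "W \<subseteq> V" "smooth_sec W \<eta>"
    and eq: "\<forall>y\<in>W. cov (conn_sum \<Gamma>1 \<Gamma>2) \<eta> y = ?\<phi> y"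
    using ex[unfolded exact_conn_def, THEN bspec, OF x, THEN spec, of V, THEN mp, OF xV,
       THEN spec, of ?\<phi>, THEN spec, of ?\<psi>, THEN mp] by blast
  have "\<forall>y\<in>W. cov \<Gamma>1 (prjL \<eta>) y = \<phi>1 y"
  proof
    fix y assume "y \<in> W"
    then have "cov (conn_sum \<Gamma>1 \<Gamma>2) \<eta> y = ?\<phi> y" using eq by blast
    then have E: "cov (conn_sum \<Gamma>1 \<Gamma>2) \<eta> y = ?\<phi> y" .
    show "cov \<Gamma>1 (prjL \<eta>) y = \<phi>1 y"
      unfolding vec_eq_iff
    proof (intro allI)
      fix b \<alpha>
      have "cov (conn_sum \<Gamma>1 \<Gamma>2) \<eta> y $ b $ Inl \<alpha> = ?\<phi> y $ b $ Inl \<alpha>" using E by simp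
      then show "cov \<Gamma>1 (prjL \<eta>) y $ b $ \<alpha> = \<phi>1 y $ b $ \<alpha>"
        by (simp add: cov_L embL_def)
    qed
  qed
  then show "\<exists>W \<eta>. open W \<and> x \<in> W \<and> W \<subseteq> V \<and> smooth_sec W \<eta> \<and> (\<forall>y\<in>W. cov \<Gamma>1 \<eta> y = \<phi>1 y)"
    using W smooth_sec_prjL by blast
qed

lemma dir2:
  fixes \<Gamma>1 :: "real^'n::finite \<Rightarrow> real^'r::finite^'r^'n"
    and \<Gamma>2 :: "real^'n \<Rightarrow> real^'s::finite^'s^'n"
  assumes ex: "exact_conn U (conn_sum \<Gamma>1 \<Gamma>2)"
  shows "exact_conn U \<Gamma>2"
  unfolding exact_conn_def
proof (intro ballI allI impI)
  fix x V \<phi>1 \<psi>1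
  assume xV: "open V \<and> x \<in> V \<and> V \<subseteq> U" and x: "x \<in> U"
    and h: "smooth_form V \<phi>1 \<and> smooth_sec V \<psi>1 \<and> (\<forall>y\<in>V. ext_cov \<Gamma>2 \<phi>1 y = curv \<Gamma>2 \<psi>1 y)"
  let ?\<phi> = "embR \<phi>1 :: _ \<Rightarrow> real^('r + 's)^'n"
  let ?\<psi> = "sembR \<psi>1 :: _ \<Rightarrow> real^('r + 's)"
  have "\<forall>y\<in>V. ext_cov (conn_sum \<Gamma>1 \<Gamma>2) ?\<phi> y = curv (conn_sum \<Gamma>1 \<Gamma>2) ?\<psi> y"
    using h by (auto intro!: sum_vec_eq simp: ext_L ext_R curv_L curv_R ext_zero curv_zero)
  moreover have "smooth_form V ?\<phi>" "smooth_sec V ?\<psi>"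
    using h smooth_form_embR smooth_sec_sembR by blast+
  ultimately obtain W \<eta> where W: "open W" "x \<in> W" "W \<subseteq> V" "smooth_sec W \<eta>"
    and eq: "\<forall>y\<in>W. cov (conn_sum \<Gamma>1 \<Gamma>2) \<eta> y = ?\<phi> y"
    using ex[unfolded exact_conn_def, THEN bspec, OF x, THEN spec, of V, THEN mp, OF xV,
       THEN spec, of ?\<phi>, THEN spec, of ?\<psi>, THEN mp] by blast
  have "\<forall>y\<in>W. cov \<Gamma>2 (prjR \<eta>) y = \<phi>1 y"
  proof
    fix y assume "y \<in> W"
    then have "cov (conn_sum \<Gamma>1 \<Gamma>2) \<eta> y = ?\<phi> y" using eq by blast
    then have E: "cov (conn_sum \<Gamma>1 \<Gamma>2) \<eta> y = ?\<phi> y" .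
    show "cov \<Gamma>2 (prjR \<eta>) y = \<phi>1 y"
      unfolding vec_eq_iff
    proof (intro allI)
      fix b \<alpha>
      have "cov (conn_sum \<Gamma>1 \<Gamma>2) \<eta> y $ b $ Inr \<alpha> = ?\<phi> y $ b $ Inr \<alpha>" using E by simp
      then show "cov \<Gamma>2 (prjR \<eta>) y $ b $ \<alpha> = \<phi>1 y $ b $ \<alpha>"
        by (simp add: cov_R embR_def)
    qed
  qed
  then show "\<exists>W \<eta>. open W \<and> x \<in> W \<and> W \<subseteq> V \<and> smooth_sec W \<eta> \<and> (\<forall>y\<in>W. cov \<Gamma>2 \<eta> y = \<phi>1 y)"
    using W smooth_sec_prjR by blast
qed

lemma dir3:
  fixes \<Gamma>1 :: "real^'n::finite \<Rightarrow> real^'r::finite^'r^'n"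
    and \<Gamma>2 :: "real^'n \<Rightarrow> real^'s::finite^'s^'n"
  assumes ex1: "exact_conn U \<Gamma>1" and ex2: "exact_conn U \<Gamma>2"
  shows "exact_conn U (conn_sum \<Gamma>1 \<Gamma>2)"
  unfolding exact_conn_def
proof (intro ballI allI impI)
  fix x V \<phi> \<psi>
  assume xV: "open V \<and> x \<in> V \<and> V \<subseteq> U" and x: "x \<in> U"
    and h: "smooth_form V \<phi> \<and> smooth_sec V \<psi> \<and> (\<forall>y\<in>V. ext_cov (conn_sum \<Gamma>1 \<Gamma>2) \<phi> y = curv (conn_sum \<Gamma>1 \<Gamma>2) \<psi> y)"
  have e1: "\<forall>y\<in>V. ext_cov \<Gamma>1 (fprjL \<phi>) y = curv \<Gamma>1 (prjL \<psi>) y"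
  proof
    fix y assume "y \<in> V"
    then have eq: "ext_cov (conn_sum \<Gamma>1 \<Gamma>2) \<phi> y = curv (conn_sum \<Gamma>1 \<Gamma>2) \<psi> y" using h by blast
    show "ext_cov \<Gamma>1 (fprjL \<phi>) y = curv \<Gamma>1 (prjL \<psi>) y"
      unfolding vec_eq_iff by (metis ext_L curv_L eq)
  qed
  have e2: "\<forall>y\<in>V. ext_cov \<Gamma>2 (fprjR \<phi>) y = curv \<Gamma>2 (prjR \<psi>) y"
  proof
    fix y assume "y \<in> V"
    then have eq: "ext_cov (conn_sum \<Gamma>1 \<Gamma>2) \<phi> y = curv (conn_sum \<Gamma>1 \<Gamma>2) \<psi> y" using h by blast
    show "ext_cov \<Gamma>2 (fprjR \<phi>) y = curv \<Gamma>2 (prjR \<psi>) y"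
      unfolding vec_eq_iff by (metis ext_R curv_R eq)
  qed
  obtain W1 \<eta>1 where W1: "open W1" "x \<in> W1" "W1 \<subseteq> V" "smooth_sec W1 \<eta>1"
    and c1: "\<forall>y\<in>W1. cov \<Gamma>1 \<eta>1 y = fprjL \<phi> y"
  proof -
    have hh: "smooth_form V (fprjL \<phi>) \<and> smooth_sec V (prjL \<psi>) \<and> (\<forall>y\<in>V. ext_cov \<Gamma>1 (fprjL \<phi>) y = curv \<Gamma>1 (prjL \<psi>) y)"
      using e1 h smooth_form_fprjL smooth_sec_prjL by blast
    show ?thesis using ex1[unfolded exact_conn_def, THEN bspec, OF x, THEN spec, of V, THEN mp, OF xV,
       THEN spec, of "fprjL \<phi>", THEN spec, of "prjL \<psi>", THEN mp, OF hh] that by blast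
  qed
  obtain W2 \<eta>2 where W2: "open W2" "x \<in> W2" "W2 \<subseteq> V" "smooth_sec W2 \<eta>2"
    and c2: "\<forall>y\<in>W2. cov \<Gamma>2 \<eta>2 y = fprjR \<phi> y"
  proof -
    have hh: "smooth_form V (fprjR \<phi>) \<and> smooth_sec V (prjR \<psi>) \<and> (\<forall>y\<in>V. ext_cov \<Gamma>2 (fprjR \<phi>) y = curv \<Gamma>2 (prjR \<psi>) y)"
      using e2 h smooth_form_fprjR smooth_sec_prjR by blast
    show ?thesis using ex2[unfolded exact_conn_def, THEN bspec, OF x, THEN spec, of V, THEN mp, OF xV,
       THEN spec, of "fprjR \<phi>", THEN spec, of "prjR \<psi>", THEN mp, OF hh] that by blast
  qed
  define \<eta> where "\<eta> = (\<lambda>y. (\<chi> \<beta>. case \<beta> of Inl a \<Rightarrow> \<eta>1 y $ a | Inr a \<Rightarrow> \<eta>2 y $ a) :: real^('r+'s))"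
  have pL: "prjL \<eta> = \<eta>1" by (rule ext) (simp add: prjL_def \<eta>_def vec_eq_iff)
  have pR: "prjR \<eta> = \<eta>2" by (rule ext) (simp add: prjR_def \<eta>_def vec_eq_iff)
  have s1: "smooth_sec (W1 \<inter> W2) \<eta>1" "smooth_sec (W1 \<inter> W2) \<eta>2"
    using W1 W2 smooth_sec_mono by blast+
  have "smooth_sec (W1 \<inter> W2) \<eta>"
    unfolding smooth_sec_def
  proof
    fix \<alpha> :: "'r + 's"
    show "smooth_fun (W1 \<inter> W2) (\<lambda>x. \<eta> x $ \<alpha>)"
      using s1 by (cases \<alpha>) (simp_all add: \<eta>_def smooth_sec_def)
  qed
  moreover have "\<forall>y\<in>W1 \<inter> W2. cov (conn_sum \<Gamma>1 \<Gamma>2) \<eta> y = \<phi> y"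
  proof
    fix y assume y: "y \<in> W1 \<inter> W2"
    then have "cov \<Gamma>1 \<eta>1 y = fprjL \<phi> y" "cov \<Gamma>2 \<eta>2 y = fprjR \<phi> y" using c1 c2 by auto
    then show "cov (conn_sum \<Gamma>1 \<Gamma>2) \<eta> y = \<phi> y"
      by (intro sum_vec_eq1) (simp add: cov_L cov_R pL pR vec_eq_iff fprjL_def fprjR_def)
  qed
  ultimately show "\<exists>W \<eta>. open W \<and> x \<in> W \<and> W \<subseteq> V \<and> smooth_sec W \<eta> \<and> (\<forall>y\<in>W. cov (conn_sum \<Gamma>1 \<Gamma>2) \<eta> y = \<phi> y)"
    using W1 W2 by (intro exI[of _ "W1 \<inter> W2"] exI[of _ \<eta>]) auto
qed

theorem proposition2p6:
  fixes U :: "(real^'n::finite) set"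
    and \<Gamma>1 :: "real^'n \<Rightarrow> real^'r::finite^'r^'n"
    and \<Gamma>2 :: "real^'n \<Rightarrow> real^'s::finite^'s^'n"
  assumes "open U"
    and "smooth_conn U \<Gamma>1" and "smooth_conn U \<Gamma>2"
    and "curv_const_rank U \<Gamma>1" and "curv_const_rank U \<Gamma>2"
  shows "exact_conn U (conn_sum \<Gamma>1 \<Gamma>2) \<longleftrightarrow> exact_conn U \<Gamma>1 \<and> exact_conn U \<Gamma>2"
  using dir1 dir2 dir3 by blast

end
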